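(* Let $R_1,R_2$ be rings and $M$ an $(R_1,R_2)$-bimodule. The formal triangular matrix ring $\begin{pmatrix} R_1 & M\\ 0 & R_2\end{pmatrix}$ is NJ-symmetric if and only if $R_1$ and $R_2$ are NJ-symmetric.
   Context: Rings are associative with identity. $N(S)$ is the set of nilpotent elements, $J(S)$ the Jacobson radical of a ring $S$. $S$ is NJ-symmetric if for all $a,b,c\in S$, $abc\in N(S)$ implies $bac\in J(S)$. *)

theory Defs
  imports "HOL-Algebra.Algebra"
begin

definition nilpotents :: "('a, 'b) ring_scheme \<Rightarrow> 'a set" where
  "nilpotents S = {a \<in> carrier S. \<exists>n::nat. a [^]\<^bsub>S\<^esub> n = \<zero>\<^bsub>S\<^esub>}"

definition left_ideal :: "'a set \<Rightarrow> ('a, 'b) ring_scheme \<Rightarrow> bool" where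
  "left_ideal I S \<longleftrightarrow> additive_subgroup I S \<and>
     (\<forall>r\<in>carrier S. \<forall>x\<in>I. r \<otimes>\<^bsub>S\<^esub> x \<in> I)"

definition maximal_left_ideal :: "'a set \<Rightarrow> ('a, 'b) ring_scheme \<Rightarrow> bool" where
  "maximal_left_ideal I S \<longleftrightarrow> left_ideal I S \<and> I \<noteq> carrier S \<and>
     (\<forall>J. left_ideal J S \<and> I \<subseteq> J \<longrightarrow> J = I \<or> J = carrier S)"

definition jacobson_radical :: "('a, 'b) ring_scheme \<Rightarrow> 'a set" where
  "jacobson_radical S = carrier S \<inter> \<Inter>{I. maximal_left_ideal I S}"

definition NJ_symmetric :: "('a, 'b) ring_scheme \<Rightarrow> bool" where
  "NJ_symmetric S \<longleftrightarrow> (\<forall>a\<in>carrier S. \<forall>b\<in>carrier S. \<forall>c\<in>carrier S.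
     a \<otimes>\<^bsub>S\<^esub> b \<otimes>\<^bsub>S\<^esub> c \<in> nilpotents S \<longrightarrow>
     b \<otimes>\<^bsub>S\<^esub> a \<otimes>\<^bsub>S\<^esub> c \<in> jacobson_radical S)"

text \<open>(R1,R2)-bimodule: abelian group M (additive structure of M) with a left R1-action
  l and a right R2-action r, unital, biadditive, associative, and compatible.\<close>
definition bimodule ::
  "('a, 'c) ring_scheme \<Rightarrow> ('m, 'd) ring_scheme \<Rightarrow> ('b, 'e) ring_scheme \<Rightarrow>
   ('a \<Rightarrow> 'm \<Rightarrow> 'm) \<Rightarrow> ('m \<Rightarrow> 'b \<Rightarrow> 'm) \<Rightarrow> bool" where
  "bimodule R1 M R2 l r \<longleftrightarrow> ring R1 \<and> ring R2 \<and> abelian_group M \<and>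
    (\<forall>x\<in>carrier R1. \<forall>m\<in>carrier M. l x m \<in> carrier M) \<and>
    (\<forall>m\<in>carrier M. \<forall>y\<in>carrier R2. r m y \<in> carrier M) \<and>
    (\<forall>x\<in>carrier R1. \<forall>m\<in>carrier M. \<forall>n\<in>carrier M. l x (m \<oplus>\<^bsub>M\<^esub> n) = l x m \<oplus>\<^bsub>M\<^esub> l x n) \<and>
    (\<forall>x\<in>carrier R1. \<forall>x'\<in>carrier R1. \<forall>m\<in>carrier M. l (x \<oplus>\<^bsub>R1\<^esub> x') m = l x m \<oplus>\<^bsub>M\<^esub> l x' m) \<and>
    (\<forall>x\<in>carrier R1. \<forall>x'\<in>carrier R1. \<forall>m\<in>carrier M. l (x \<otimes>\<^bsub>R1\<^esub> x') m = l x (l x' m)) \<and>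
    (\<forall>m\<in>carrier M. l \<one>\<^bsub>R1\<^esub> m = m) \<and>
    (\<forall>m\<in>carrier M. \<forall>n\<in>carrier M. \<forall>y\<in>carrier R2. r (m \<oplus>\<^bsub>M\<^esub> n) y = r m y \<oplus>\<^bsub>M\<^esub> r n y) \<and>
    (\<forall>m\<in>carrier M. \<forall>y\<in>carrier R2. \<forall>y'\<in>carrier R2. r m (y \<oplus>\<^bsub>R2\<^esub> y') = r m y \<oplus>\<^bsub>M\<^esub> r m y') \<and>
    (\<forall>m\<in>carrier M. \<forall>y\<in>carrier R2. \<forall>y'\<in>carrier R2. r m (y \<otimes>\<^bsub>R2\<^esub> y') = r (r m y) y') \<and>
    (\<forall>m\<in>carrier M. r m \<one>\<^bsub>R2\<^esub> = m) \<and>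
    (\<forall>x\<in>carrier R1. \<forall>m\<in>carrier M. \<forall>y\<in>carrier R2. r (l x m) y = l x (r m y))"

text \<open>Formal triangular matrix ring [[R1, M], [0, R2]], elements (a, m, b).\<close>
definition tri_ring ::
  "('a, 'c) ring_scheme \<Rightarrow> ('m, 'd) ring_scheme \<Rightarrow> ('b, 'e) ring_scheme \<Rightarrow>
   ('a \<Rightarrow> 'm \<Rightarrow> 'm) \<Rightarrow> ('m \<Rightarrow> 'b \<Rightarrow> 'm) \<Rightarrow> ('a \<times> 'm \<times> 'b) ring" where
  "tri_ring R1 M R2 l r =
    \<lparr>carrier = carrier R1 \<times> carrier M \<times> carrier R2,
     monoid.mult = (\<lambda>(a, m, b) (a', m', b').
        (a \<otimes>\<^bsub>R1\<^esub> a', l a m' \<oplus>\<^bsub>M\<^esub> r m b', b \<otimes>\<^bsub>R2\<^esub> b')),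
     monoid.one = (\<one>\<^bsub>R1\<^esub>, \<zero>\<^bsub>M\<^esub>, \<one>\<^bsub>R2\<^esub>),
     ring.zero = (\<zero>\<^bsub>R1\<^esub>, \<zero>\<^bsub>M\<^esub>, \<zero>\<^bsub>R2\<^esub>),
     ring.add = (\<lambda>(a, m, b) (a', m', b'). (a \<oplus>\<^bsub>R1\<^esub> a', m \<oplus>\<^bsub>M\<^esub> m', b \<oplus>\<^bsub>R2\<^esub> b'))\<rparr>"

end

theory Submission imports Defs begin

lemma (in ring) addsubI: "H \<subseteq> carrier R \<Longrightarrow> \<zero> \<in> H \<Longrightarrow> (\<And>x y. x\<in>H \<Longrightarrow> y\<in>H \<Longrightarrow> x\<oplus>y \<in> H) \<Longrightarrow> (\<And>x. x\<in>H \<Longrightarrow> \<ominus>x \<in> H) \<Longrightarrow> additive_subgroup H R"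
  by (auto intro!: additive_subgroup.intro subgroup.intro simp: a_inv_def)

lemma (in ring) left_ideal_one:
  assumes "left_ideal I R" "\<one> \<in> I" shows "I = carrier R"
proof
  show "I \<subseteq> carrier R" using assms(1) unfolding left_ideal_def additive_subgroup_def subgroup_def by auto
  show "carrier R \<subseteq> I"
  proof
    fix s assume "s \<in> carrier R"
    then have "s \<otimes> \<one> \<in> I" using assms unfolding left_ideal_def by blast
    then show "s \<in> I" using \<open>s \<in> carrier R\<close> by simp
  qed
qed

lemma (in ring) left_ideal_sub: "left_ideal I R \<Longrightarrow> I \<subseteq> carrier R"
  unfolding left_ideal_def additive_subgroup_def subgroup_def by auto

lemma (in ring) left_ideal_add: "left_ideal I R \<Longrightarrow> x \<in> I \<Longrightarrow> y \<in> I \<Longrightarrow> x \<oplus> y \<in> I"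
  unfolding left_ideal_def by (simp add: additive_subgroup.a_closed)

lemma (in ring) left_ideal_neg: "left_ideal I R \<Longrightarrow> x \<in> I \<Longrightarrow> \<ominus> x \<in> I"
  unfolding left_ideal_def by (simp add: additive_subgroup.a_inv_closed)

lemma (in ring) left_ideal_zero: "left_ideal I R \<Longrightarrow> \<zero> \<in> I"
  unfolding left_ideal_def by (simp add: additive_subgroup.zero_closed)

lemma (in ring) left_ideal_mult: "left_ideal I R \<Longrightarrow> s \<in> carrier R \<Longrightarrow> x \<in> I \<Longrightarrow> s \<otimes> x \<in> I"
  unfolding left_ideal_def by blast

lemma (in ring) jac_imp:
  assumes x: "x \<in> jacobson_radical R" and r: "r \<in> carrier R"
  shows "\<exists>u\<in>carrier R. u \<otimes> (\<one> \<oplus> r \<otimes> x) = \<one>"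
proof (rule ccontr)
  assume nu: "\<not> ?thesis"
  have xc: "x \<in> carrier R" using x unfolding jacobson_radical_def by auto
  define y where "y = \<one> \<oplus> r \<otimes> x"
  have yc: "y \<in> carrier R" using xc r y_def by simp
  define L0 where "L0 = {s \<otimes> y | s. s \<in> carrier R}"
  have L0: "left_ideal L0 R"
    unfolding left_ideal_def
  proof
    show "additive_subgroup L0 R"
    proof (rule addsubI)
      show "L0 \<subseteq> carrier R" using yc L0_def by auto
      show "\<zero> \<in> L0" unfolding L0_def using yc by (auto intro!: exI[of _ \<zero>])
      fix a b assume "a \<in> L0" "b \<in> L0"
      then obtain s t where "s \<in> carrier R" "t \<in> carrier R" "a = s \<otimes> y" "b = t \<otimes> y" unfolding L0_def by auto
      then show "a \<oplus> b \<in> L0" unfolding L0_def using yc by (auto intro!: exI[of _ "s \<oplus> t"] simp: l_distr)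
    next
      fix a assume "a \<in> L0"
      then obtain s where "s \<in> carrier R" "a = s \<otimes> y" unfolding L0_def by auto
      then show "\<ominus> a \<in> L0" unfolding L0_def using yc by (auto intro!: exI[of _ "\<ominus> s"] simp: l_minus)
    qed
    show "\<forall>s\<in>carrier R. \<forall>a\<in>L0. s \<otimes> a \<in> L0"
      unfolding L0_def using yc by (auto simp: m_assoc[symmetric])
  qed
  have one_L0: "\<one> \<notin> L0" using nu unfolding L0_def y_def by auto
  have yL0: "y \<in> L0" unfolding L0_def using yc by (auto intro!: exI[of _ \<one>])
  define A where "A = {I. left_ideal I R \<and> L0 \<subseteq> I \<and> \<one> \<notin> I}"
  have "\<forall>CC\<in>chains A. \<exists>UU\<in>A. \<forall>XX\<in>CC. XX \<subseteq> UU"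
  proof
    fix C assume C: "C \<in> chains A"
    show "\<exists>UU\<in>A. \<forall>XX\<in>C. XX \<subseteq> UU"
    proof (cases "C = {}")
      case True
      then show ?thesis using L0 one_L0 A_def by auto
    next
      case False
      have CA: "C \<subseteq> A" and ch: "\<And>I J. I \<in> C \<Longrightarrow> J \<in> C \<Longrightarrow> I \<subseteq> J \<or> J \<subseteq> I"
        using C unfolding chains_def chain_subset_def by auto
      have li: "\<And>I. I \<in> C \<Longrightarrow> left_ideal I R" using CA A_def by auto
      have "left_ideal (\<Union>C) R"
        unfolding left_ideal_def
      proof
        show "additive_subgroup (\<Union>C) R"
        proof (rule addsubI)
          show "\<Union>C \<subseteq> carrier R" using li left_ideal_sub by blast
          show "\<zero> \<in> \<Union>C" using False li left_ideal_zero by blast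
          fix a b assume "a \<in> \<Union>C" "b \<in> \<Union>C"
          then obtain I J where "I \<in> C" "J \<in> C" "a \<in> I" "b \<in> J" by auto
          then show "a \<oplus> b \<in> \<Union>C" using ch[of I J] li left_ideal_add
            by (metis UnionI subsetD)
        next
          fix a assume "a \<in> \<Union>C"
          then show "\<ominus> a \<in> \<Union>C" using li left_ideal_neg by blast
        qed
        show "\<forall>s\<in>carrier R. \<forall>a\<in>\<Union>C. s \<otimes> a \<in> \<Union>C" using li left_ideal_mult by blast
      qed
      moreover have "L0 \<subseteq> \<Union>C" using False CA A_def by auto
      moreover have "\<one> \<notin> \<Union>C" using CA A_def by auto
      ultimately show ?thesis unfolding A_def by auto
    qed
  qed
  from Zorn_Lemma2[OF this] obtain Mx where MA: "Mx \<in> A" and mx: "\<forall>XX\<in>A. Mx \<subseteq> XX \<longrightarrow> XX = Mx" by blast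
  have "maximal_left_ideal Mx R"
    unfolding maximal_left_ideal_def
  proof (intro conjI allI impI)
    show "left_ideal Mx R" using MA A_def by auto
    show "Mx \<noteq> carrier R" using MA A_def by auto
    fix J assume J: "left_ideal J R \<and> Mx \<subseteq> J"
    show "J = Mx \<or> J = carrier R"
    proof (cases "\<one> \<in> J")
      case True then show ?thesis using J left_ideal_one by blast
    next
      case False
      then have "J \<in> A" using J MA A_def by auto
      then show ?thesis using mx J by blast
    qed
  qed
  then have "x \<in> Mx" using x unfolding jacobson_radical_def by auto
  then have rx: "r \<otimes> x \<in> Mx" using MA A_def left_ideal_mult r by auto
  have yM: "y \<in> Mx" using yL0 MA A_def by auto
  have "y \<oplus> \<ominus> (r \<otimes> x) \<in> Mx" using rx yM MA A_def left_ideal_add left_ideal_neg by auto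
  moreover have "y \<oplus> \<ominus> (r \<otimes> x) = \<one>" unfolding y_def using r xc
    by (simp add: a_assoc r_neg)
  ultimately show False using MA A_def by auto
qed

lemma (in ring) jac_rev:
  assumes xc: "x \<in> carrier R" and h: "\<forall>r\<in>carrier R. \<exists>u\<in>carrier R. u \<otimes> (\<one> \<oplus> r \<otimes> x) = \<one>"
  shows "x \<in> jacobson_radical R"
  unfolding jacobson_radical_def
proof (intro IntI xc InterI, safe)
  fix Lm assume ml: "maximal_left_ideal Lm R"
  have L: "left_ideal Lm R" and Lne: "Lm \<noteq> carrier R"
    and mx: "\<And>J. left_ideal J R \<Longrightarrow> Lm \<subseteq> J \<Longrightarrow> J = Lm \<or> J = carrier R"
    using ml unfolding maximal_left_ideal_def by auto
  show "x \<in> Lm"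
  proof (rule ccontr)
    assume xn: "x \<notin> Lm"
    define K where "K = {i \<oplus> s \<otimes> x | i s. i \<in> Lm \<and> s \<in> carrier R}"
    have Lc: "Lm \<subseteq> carrier R" using L left_ideal_sub by auto
    have K: "left_ideal K R"
      unfolding left_ideal_def
    proof
      show "additive_subgroup K R"
      proof (rule addsubI)
        show "K \<subseteq> carrier R" using Lc xc K_def by auto
        show "\<zero> \<in> K" unfolding K_def using xc L left_ideal_zero
          by (auto intro!: exI[of _ \<zero>])
        fix a b assume "a \<in> K" "b \<in> K"
        then obtain i s j t where ij: "i \<in> Lm" "s \<in> carrier R" "j \<in> Lm" "t \<in> carrier R" "a = i \<oplus> s \<otimes> x" "b = j \<oplus> t \<otimes> x" unfolding K_def by auto
        then have "a \<oplus> b = (i \<oplus> j) \<oplus> (s \<oplus> t) \<otimes> x" using xc Lc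
          by (simp add: l_distr a_ac subsetD)
        then show "a \<oplus> b \<in> K" unfolding K_def using ij L left_ideal_add by blast
      next
        fix a assume "a \<in> K"
        then obtain i s where ij: "i \<in> Lm" "s \<in> carrier R" "a = i \<oplus> s \<otimes> x" unfolding K_def by auto
        then have "\<ominus> a = (\<ominus> i) \<oplus> (\<ominus> s) \<otimes> x" using xc Lc
          by (simp add: l_minus minus_add subsetD)
        then show "\<ominus> a \<in> K" unfolding K_def using ij L left_ideal_neg by blast
      qed
      show "\<forall>t\<in>carrier R. \<forall>a\<in>K. t \<otimes> a \<in> K"
      proof (intro ballI)
        fix t a assume t: "t \<in> carrier R" and "a \<in> K"
        then obtain i s where ij: "i \<in> Lm" "s \<in> carrier R" "a = i \<oplus> s \<otimes> x" unfolding K_def by auto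
        then have "t \<otimes> a = t \<otimes> i \<oplus> (t \<otimes> s) \<otimes> x" using xc Lc t
          by (simp add: r_distr m_assoc subsetD)
        then show "t \<otimes> a \<in> K" unfolding K_def using ij t L left_ideal_mult by blast
      qed
    qed
    have LK: "Lm \<subseteq> K"
    proof
      fix i assume "i \<in> Lm"
      then have "i = i \<oplus> \<zero> \<otimes> x" using xc Lc by auto
      then show "i \<in> K" unfolding K_def using \<open>i \<in> Lm\<close> by blast
    qed
    have "x = \<zero> \<oplus> \<one> \<otimes> x" using xc by simp
    then have "x \<in> K" unfolding K_def using L left_ideal_zero by blast
    then have "K = carrier R" using mx[OF K LK] xn by auto
    then have "\<one> \<in> K" by auto
    then obtain i s where ij: "i \<in> Lm" "s \<in> carrier R" "\<one> = i \<oplus> s \<otimes> x" unfolding K_def by auto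
    have ic: "i \<in> carrier R" using ij Lc by auto
    have "i = \<one> \<oplus> (\<ominus> s) \<otimes> x"
    proof -
      have "\<one> \<oplus> (\<ominus> s) \<otimes> x = (i \<oplus> s \<otimes> x) \<oplus> \<ominus> (s \<otimes> x)" using ij(3) xc ij(2) by (simp add: l_minus)
      also have "\<dots> = i" using ic xc ij(2) by (simp add: a_assoc r_neg)
      finally show ?thesis by simp
    qed
    then obtain u where u: "u \<in> carrier R" "u \<otimes> i = \<one>" using h ij(2) by (metis a_inv_closed)
    then have "\<one> \<in> Lm" using L left_ideal_mult ij(1) by metis
    then show False using Lne L left_ideal_one by blast
  qed
qed

lemma (in ring) jac_char:
  "x \<in> jacobson_radical R \<longleftrightarrow> x \<in> carrier R \<and> (\<forall>r\<in>carrier R. \<exists>u\<in>carrier R. u \<otimes> (\<one> \<oplus> r \<otimes> x) = \<one>)"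
  using jac_imp jac_rev by (auto simp: jacobson_radical_def)


locale trictx =
  fixes R1 :: "('a, 'c) ring_scheme" and M :: "('m, 'd) ring_scheme"
    and R2 :: "('b, 'e) ring_scheme"
    and l :: "'a \<Rightarrow> 'm \<Rightarrow> 'm" and r :: "'m \<Rightarrow> 'b \<Rightarrow> 'm"
  assumes bim: "bimodule R1 M R2 l r"
begin

lemma R1r: "ring R1" and R2r: "ring R2" and Mg: "abelian_group M"
  using bim unfolding bimodule_def by auto

sublocale R1: ring R1 by (rule R1r)
sublocale R2: ring R2 by (rule R2r)
sublocale M: abelian_group M by (rule Mg)

lemma l_cl[simp]: "x \<in> carrier R1 \<Longrightarrow> m \<in> carrier M \<Longrightarrow> l x m \<in> carrier M"
  and r_cl[simp]: "m \<in> carrier M \<Longrightarrow> y \<in> carrier R2 \<Longrightarrow> r m y \<in> carrier M"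
  and l_add: "x \<in> carrier R1 \<Longrightarrow> m \<in> carrier M \<Longrightarrow> n \<in> carrier M \<Longrightarrow> l x (m \<oplus>\<^bsub>M\<^esub> n) = l x m \<oplus>\<^bsub>M\<^esub> l x n"
  and l_add2: "x \<in> carrier R1 \<Longrightarrow> x' \<in> carrier R1 \<Longrightarrow> m \<in> carrier M \<Longrightarrow> l (x \<oplus>\<^bsub>R1\<^esub> x') m = l x m \<oplus>\<^bsub>M\<^esub> l x' m"
  and l_mult: "x \<in> carrier R1 \<Longrightarrow> x' \<in> carrier R1 \<Longrightarrow> m \<in> carrier M \<Longrightarrow> l (x \<otimes>\<^bsub>R1\<^esub> x') m = l x (l x' m)"
  and l_one[simp]: "m \<in> carrier M \<Longrightarrow> l \<one>\<^bsub>R1\<^esub> m = m"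
  and r_add: "m \<in> carrier M \<Longrightarrow> n \<in> carrier M \<Longrightarrow> y \<in> carrier R2 \<Longrightarrow> r (m \<oplus>\<^bsub>M\<^esub> n) y = r m y \<oplus>\<^bsub>M\<^esub> r n y"
  and r_add2: "m \<in> carrier M \<Longrightarrow> y \<in> carrier R2 \<Longrightarrow> y' \<in> carrier R2 \<Longrightarrow> r m (y \<oplus>\<^bsub>R2\<^esub> y') = r m y \<oplus>\<^bsub>M\<^esub> r m y'"
  and r_mult: "m \<in> carrier M \<Longrightarrow> y \<in> carrier R2 \<Longrightarrow> y' \<in> carrier R2 \<Longrightarrow> r m (y \<otimes>\<^bsub>R2\<^esub> y') = r (r m y) y'"
  and r_one[simp]: "m \<in> carrier M \<Longrightarrow> r m \<one>\<^bsub>R2\<^esub> = m"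
  and lr: "x \<in> carrier R1 \<Longrightarrow> m \<in> carrier M \<Longrightarrow> y \<in> carrier R2 \<Longrightarrow> r (l x m) y = l x (r m y)"
  using bim unfolding bimodule_def by auto

lemma l_zero[simp]: "x \<in> carrier R1 \<Longrightarrow> l x \<zero>\<^bsub>M\<^esub> = \<zero>\<^bsub>M\<^esub>"
proof -
  assume x: "x \<in> carrier R1"
  have "l x \<zero>\<^bsub>M\<^esub> \<oplus>\<^bsub>M\<^esub> l x \<zero>\<^bsub>M\<^esub> = l x \<zero>\<^bsub>M\<^esub>"
    using l_add[OF x, of "\<zero>\<^bsub>M\<^esub>" "\<zero>\<^bsub>M\<^esub>"] by simp
  then show ?thesis using x by simp
qed

lemma r_zero[simp]: "y \<in> carrier R2 \<Longrightarrow> r \<zero>\<^bsub>M\<^esub> y = \<zero>\<^bsub>M\<^esub>"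
proof -
  assume y: "y \<in> carrier R2"
  have "r \<zero>\<^bsub>M\<^esub> y \<oplus>\<^bsub>M\<^esub> r \<zero>\<^bsub>M\<^esub> y = r \<zero>\<^bsub>M\<^esub> y"
    using r_add[of "\<zero>\<^bsub>M\<^esub>" "\<zero>\<^bsub>M\<^esub>", OF _ _ y] by simp
  then show ?thesis using y by simp
qed

lemma zero_l[simp]: "m \<in> carrier M \<Longrightarrow> l \<zero>\<^bsub>R1\<^esub> m = \<zero>\<^bsub>M\<^esub>"
proof -
  assume m: "m \<in> carrier M"
  have "l \<zero>\<^bsub>R1\<^esub> m \<oplus>\<^bsub>M\<^esub> l \<zero>\<^bsub>R1\<^esub> m = l \<zero>\<^bsub>R1\<^esub> m"
    using l_add2[of "\<zero>\<^bsub>R1\<^esub>" "\<zero>\<^bsub>R1\<^esub>", OF _ _ m] by simp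
  then show ?thesis using m by simp
qed

lemma zero_r[simp]: "m \<in> carrier M \<Longrightarrow> r m \<zero>\<^bsub>R2\<^esub> = \<zero>\<^bsub>M\<^esub>"
proof -
  assume m: "m \<in> carrier M"
  have "r m \<zero>\<^bsub>R2\<^esub> \<oplus>\<^bsub>M\<^esub> r m \<zero>\<^bsub>R2\<^esub> = r m \<zero>\<^bsub>R2\<^esub>"
    using r_add2[OF m, of "\<zero>\<^bsub>R2\<^esub>" "\<zero>\<^bsub>R2\<^esub>"] by simp
  then show ?thesis using m by simp
qed

abbreviation "T \<equiv> tri_ring R1 M R2 l r"

lemma T_carrier: "carrier T = carrier R1 \<times> carrier M \<times> carrier R2"
  and T_mult: "(a, m, b) \<otimes>\<^bsub>T\<^esub> (a', m', b') = (a \<otimes>\<^bsub>R1\<^esub> a', l a m' \<oplus>\<^bsub>M\<^esub> r m b', b \<otimes>\<^bsub>R2\<^esub> b')"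
  and T_one: "\<one>\<^bsub>T\<^esub> = (\<one>\<^bsub>R1\<^esub>, \<zero>\<^bsub>M\<^esub>, \<one>\<^bsub>R2\<^esub>)"
  and T_zero: "\<zero>\<^bsub>T\<^esub> = (\<zero>\<^bsub>R1\<^esub>, \<zero>\<^bsub>M\<^esub>, \<zero>\<^bsub>R2\<^esub>)"
  and T_add: "(a, m, b) \<oplus>\<^bsub>T\<^esub> (a', m', b') = (a \<oplus>\<^bsub>R1\<^esub> a', m \<oplus>\<^bsub>M\<^esub> m', b \<oplus>\<^bsub>R2\<^esub> b')"
  by (simp_all add: tri_ring_def)

lemma T_ring: "ring T"
proof (rule ringI)
  show "abelian_group T"
  proof (rule abelian_groupI)
    show "\<And>x y. x \<in> carrier T \<Longrightarrow> y \<in> carrier T \<Longrightarrow> x \<oplus>\<^bsub>T\<^esub> y \<in> carrier T"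
      by (auto simp: T_carrier T_add)
    show "\<zero>\<^bsub>T\<^esub> \<in> carrier T" by (simp add: T_carrier T_zero)
    show "\<And>x y z. x \<in> carrier T \<Longrightarrow> y \<in> carrier T \<Longrightarrow> z \<in> carrier T \<Longrightarrow> x \<oplus>\<^bsub>T\<^esub> y \<oplus>\<^bsub>T\<^esub> z = x \<oplus>\<^bsub>T\<^esub> (y \<oplus>\<^bsub>T\<^esub> z)"
      by (auto simp: T_carrier T_add R1.a_assoc R2.a_assoc M.a_assoc)
    show "\<And>x y. x \<in> carrier T \<Longrightarrow> y \<in> carrier T \<Longrightarrow> x \<oplus>\<^bsub>T\<^esub> y = y \<oplus>\<^bsub>T\<^esub> x"
      by (auto simp: T_carrier T_add R1.a_comm R2.a_comm M.a_comm)
    show "\<And>x. x \<in> carrier T \<Longrightarrow> \<zero>\<^bsub>T\<^esub> \<oplus>\<^bsub>T\<^esub> x = x"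
      by (auto simp: T_carrier T_add T_zero)
    show "\<And>x. x \<in> carrier T \<Longrightarrow> \<exists>y\<in>carrier T. y \<oplus>\<^bsub>T\<^esub> x = \<zero>\<^bsub>T\<^esub>"
    proof -
      fix x assume "x \<in> carrier T"
      then obtain a m b where "x = (a, m, b)" "a \<in> carrier R1" "m \<in> carrier M" "b \<in> carrier R2"
        by (auto simp: T_carrier)
      then show "\<exists>y\<in>carrier T. y \<oplus>\<^bsub>T\<^esub> x = \<zero>\<^bsub>T\<^esub>"
        by (intro bexI[of _ "(\<ominus>\<^bsub>R1\<^esub> a, \<ominus>\<^bsub>M\<^esub> m, \<ominus>\<^bsub>R2\<^esub> b)"])
          (auto simp: T_carrier T_add T_zero R1.l_neg R2.l_neg M.l_neg)
    qed
  qed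
  show "monoid T"
  proof (rule monoidI)
    show "\<And>x y. x \<in> carrier T \<Longrightarrow> y \<in> carrier T \<Longrightarrow> x \<otimes>\<^bsub>T\<^esub> y \<in> carrier T"
      by (auto simp: T_carrier T_mult)
    show "\<one>\<^bsub>T\<^esub> \<in> carrier T" by (simp add: T_carrier T_one)
    show "\<And>x. x \<in> carrier T \<Longrightarrow> \<one>\<^bsub>T\<^esub> \<otimes>\<^bsub>T\<^esub> x = x"
      by (auto simp: T_carrier T_mult T_one)
    show "\<And>x. x \<in> carrier T \<Longrightarrow> x \<otimes>\<^bsub>T\<^esub> \<one>\<^bsub>T\<^esub> = x"
      by (auto simp: T_carrier T_mult T_one)
    show "\<And>x y z. x \<in> carrier T \<Longrightarrow> y \<in> carrier T \<Longrightarrow> z \<in> carrier T \<Longrightarrow> x \<otimes>\<^bsub>T\<^esub> y \<otimes>\<^bsub>T\<^esub> z = x \<otimes>\<^bsub>T\<^esub> (y \<otimes>\<^bsub>T\<^esub> z)"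
      by (auto simp: T_carrier T_mult R1.m_assoc R2.m_assoc M.a_assoc l_add r_add l_mult r_mult lr)
  qed
  show "\<And>x y z. x \<in> carrier T \<Longrightarrow> y \<in> carrier T \<Longrightarrow> z \<in> carrier T \<Longrightarrow> (x \<oplus>\<^bsub>T\<^esub> y) \<otimes>\<^bsub>T\<^esub> z = x \<otimes>\<^bsub>T\<^esub> z \<oplus>\<^bsub>T\<^esub> y \<otimes>\<^bsub>T\<^esub> z"
    by (auto simp: T_carrier T_mult T_add R1.l_distr R2.l_distr l_add2 r_add M.a_ac)
  show "\<And>x y z. x \<in> carrier T \<Longrightarrow> y \<in> carrier T \<Longrightarrow> z \<in> carrier T \<Longrightarrow> z \<otimes>\<^bsub>T\<^esub> (x \<oplus>\<^bsub>T\<^esub> y) = z \<otimes>\<^bsub>T\<^esub> x \<oplus>\<^bsub>T\<^esub> z \<otimes>\<^bsub>T\<^esub> y"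
    by (auto simp: T_carrier T_mult T_add R1.r_distr R2.r_distr l_add r_add2 M.a_ac)
qed


lemma T_pow: "fst (Z [^]\<^bsub>T\<^esub> (n::nat)) = fst Z [^]\<^bsub>R1\<^esub> n \<and> snd (snd (Z [^]\<^bsub>T\<^esub> n)) = snd (snd Z) [^]\<^bsub>R2\<^esub> n"
proof (induction n)
  case 0 then show ?case by (simp add: T_one)
next
  case (Suc n)
  obtain a m b where Z: "Z = (a, m, b)" by (cases Z) auto
  obtain a' m' b' where P: "Z [^]\<^bsub>T\<^esub> n = (a', m', b')" by (cases "Z [^]\<^bsub>T\<^esub> n") auto
  show ?case using Suc Z P by (simp add: T_mult)
qed

lemma T_nil:
  assumes Z: "Z \<in> carrier T" and a: "fst Z \<in> nilpotents R1" and b: "snd (snd Z) \<in> nilpotents R2"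
  shows "Z \<in> nilpotents T"
proof -
  interpret Tr: ring T by (rule T_ring)
  obtain p where p: "fst Z [^]\<^bsub>R1\<^esub> (p::nat) = \<zero>\<^bsub>R1\<^esub>" using a unfolding nilpotents_def by auto
  obtain q where q: "snd (snd Z) [^]\<^bsub>R2\<^esub> (q::nat) = \<zero>\<^bsub>R2\<^esub>" using b unfolding nilpotents_def by auto
  have Xp: "Z [^]\<^bsub>T\<^esub> p \<in> carrier T" and Xq: "Z [^]\<^bsub>T\<^esub> q \<in> carrier T" using Z by auto
  obtain a1 m1 b1 where P: "Z [^]\<^bsub>T\<^esub> p = (a1, m1, b1)" by (cases "Z [^]\<^bsub>T\<^esub> p") auto
  obtain a2 m2 b2 where Q: "Z [^]\<^bsub>T\<^esub> q = (a2, m2, b2)" by (cases "Z [^]\<^bsub>T\<^esub> q") auto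
  have a1: "a1 = \<zero>\<^bsub>R1\<^esub>" using T_pow[of Z p] P p by simp
  have b2: "b2 = \<zero>\<^bsub>R2\<^esub>" using T_pow[of Z q] Q q by simp
  have c: "a2 \<in> carrier R1" "m1 \<in> carrier M" "m2 \<in> carrier M" "b1 \<in> carrier R2"
    using Xp Xq P Q by (auto simp: T_carrier)
  have "Z [^]\<^bsub>T\<^esub> (p + q) = Z [^]\<^bsub>T\<^esub> p \<otimes>\<^bsub>T\<^esub> Z [^]\<^bsub>T\<^esub> q"
    using Z by (simp add: Tr.nat_pow_mult)
  also have "\<dots> = \<zero>\<^bsub>T\<^esub>" using P Q a1 b2 c by (simp add: T_mult T_zero)
  finally show ?thesis using Z unfolding nilpotents_def by blast
qed

lemma T_jac: "(a, m, b) \<in> jacobson_radical T \<longleftrightarrow>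
   a \<in> jacobson_radical R1 \<and> m \<in> carrier M \<and> b \<in> jacobson_radical R2"
proof -
  interpret Tr: ring T by (rule T_ring)
  show ?thesis
  proof
    assume J: "(a, m, b) \<in> jacobson_radical T"
    have c: "a \<in> carrier R1" "m \<in> carrier M" "b \<in> carrier R2"
      using J by (auto simp: jacobson_radical_def T_carrier)
    have h: "\<And>R. R \<in> carrier T \<Longrightarrow> \<exists>U\<in>carrier T. U \<otimes>\<^bsub>T\<^esub> (\<one>\<^bsub>T\<^esub> \<oplus>\<^bsub>T\<^esub> R \<otimes>\<^bsub>T\<^esub> (a, m, b)) = \<one>\<^bsub>T\<^esub>"
      using J Tr.jac_char by blast
    have "a \<in> jacobson_radical R1"
    proof (rule R1.jac_rev[OF c(1)], intro ballI)
      fix x assume x: "x \<in> carrier R1"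
      then obtain U where U: "U \<in> carrier T" "U \<otimes>\<^bsub>T\<^esub> (\<one>\<^bsub>T\<^esub> \<oplus>\<^bsub>T\<^esub> (x, \<zero>\<^bsub>M\<^esub>, \<zero>\<^bsub>R2\<^esub>) \<otimes>\<^bsub>T\<^esub> (a, m, b)) = \<one>\<^bsub>T\<^esub>"
        using h[of "(x, \<zero>\<^bsub>M\<^esub>, \<zero>\<^bsub>R2\<^esub>)"] by (auto simp: T_carrier)
      obtain u k v where "U = (u, k, v)" by (cases U) auto
      then show "\<exists>u\<in>carrier R1. u \<otimes>\<^bsub>R1\<^esub> (\<one>\<^bsub>R1\<^esub> \<oplus>\<^bsub>R1\<^esub> x \<otimes>\<^bsub>R1\<^esub> a) = \<one>\<^bsub>R1\<^esub>"
        using U by (auto simp: T_carrier T_mult T_add T_one)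
    qed
    moreover have "b \<in> jacobson_radical R2"
    proof (rule R2.jac_rev[OF c(3)], intro ballI)
      fix y assume y: "y \<in> carrier R2"
      then obtain U where U: "U \<in> carrier T" "U \<otimes>\<^bsub>T\<^esub> (\<one>\<^bsub>T\<^esub> \<oplus>\<^bsub>T\<^esub> (\<zero>\<^bsub>R1\<^esub>, \<zero>\<^bsub>M\<^esub>, y) \<otimes>\<^bsub>T\<^esub> (a, m, b)) = \<one>\<^bsub>T\<^esub>"
        using h[of "(\<zero>\<^bsub>R1\<^esub>, \<zero>\<^bsub>M\<^esub>, y)"] by (auto simp: T_carrier)
      obtain u k v where "U = (u, k, v)" by (cases U) auto
      then show "\<exists>v\<in>carrier R2. v \<otimes>\<^bsub>R2\<^esub> (\<one>\<^bsub>R2\<^esub> \<oplus>\<^bsub>R2\<^esub> y \<otimes>\<^bsub>R2\<^esub> b) = \<one>\<^bsub>R2\<^esub>"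
        using U by (auto simp: T_carrier T_mult T_add T_one)
    qed
    ultimately show "a \<in> jacobson_radical R1 \<and> m \<in> carrier M \<and> b \<in> jacobson_radical R2"
      using c by auto
  next
    assume H: "a \<in> jacobson_radical R1 \<and> m \<in> carrier M \<and> b \<in> jacobson_radical R2"
    have c: "a \<in> carrier R1" "m \<in> carrier M" "b \<in> carrier R2"
      using H by (auto simp: jacobson_radical_def)
    show "(a, m, b) \<in> jacobson_radical T"
    proof (rule Tr.jac_rev)
      show "(a, m, b) \<in> carrier T" using c by (simp add: T_carrier)
      show "\<forall>R\<in>carrier T. \<exists>U\<in>carrier T. U \<otimes>\<^bsub>T\<^esub> (\<one>\<^bsub>T\<^esub> \<oplus>\<^bsub>T\<^esub> R \<otimes>\<^bsub>T\<^esub> (a, m, b)) = \<one>\<^bsub>T\<^esub>"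
      proof
        fix R assume "R \<in> carrier T"
        then obtain x n y where R: "R = (x, n, y)" "x \<in> carrier R1" "n \<in> carrier M" "y \<in> carrier R2"
          by (auto simp: T_carrier)
        obtain u where u: "u \<in> carrier R1" "u \<otimes>\<^bsub>R1\<^esub> (\<one>\<^bsub>R1\<^esub> \<oplus>\<^bsub>R1\<^esub> x \<otimes>\<^bsub>R1\<^esub> a) = \<one>\<^bsub>R1\<^esub>"
          using H R(2) R1.jac_char by blast
        obtain v where v: "v \<in> carrier R2" "v \<otimes>\<^bsub>R2\<^esub> (\<one>\<^bsub>R2\<^esub> \<oplus>\<^bsub>R2\<^esub> y \<otimes>\<^bsub>R2\<^esub> b) = \<one>\<^bsub>R2\<^esub>"
          using H R(4) R2.jac_char by blast
        define s where "s = \<one>\<^bsub>R2\<^esub> \<oplus>\<^bsub>R2\<^esub> y \<otimes>\<^bsub>R2\<^esub> b"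
        define q where "q = \<zero>\<^bsub>M\<^esub> \<oplus>\<^bsub>M\<^esub> (l x m \<oplus>\<^bsub>M\<^esub> r n b)"
        define w where "w = l u q"
        have sc: "s \<in> carrier R2" using s_def R c by simp
        have qc: "q \<in> carrier M" using q_def R c by simp
        have wc: "w \<in> carrier M" using w_def u qc by simp
        have mid: "w \<oplus>\<^bsub>M\<^esub> r (r (\<ominus>\<^bsub>M\<^esub> w) v) s = \<zero>\<^bsub>M\<^esub>"
        proof -
          have "r (r (\<ominus>\<^bsub>M\<^esub> w) v) s = r (\<ominus>\<^bsub>M\<^esub> w) (v \<otimes>\<^bsub>R2\<^esub> s)"
            using r_mult[of "\<ominus>\<^bsub>M\<^esub> w" v s] wc v sc by simp
          also have "\<dots> = \<ominus>\<^bsub>M\<^esub> w" using v s_def wc by simp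
          finally show ?thesis using wc by (simp add: M.r_neg)
        qed
        have "(u, r (\<ominus>\<^bsub>M\<^esub> w) v, v) \<otimes>\<^bsub>T\<^esub> (\<one>\<^bsub>T\<^esub> \<oplus>\<^bsub>T\<^esub> R \<otimes>\<^bsub>T\<^esub> (a, m, b)) = \<one>\<^bsub>T\<^esub>"
          using R u v mid unfolding w_def q_def s_def by (simp add: T_mult T_add T_one)
        moreover have "(u, r (\<ominus>\<^bsub>M\<^esub> w) v, v) \<in> carrier T" using u v wc by (simp add: T_carrier)
        ultimately show "\<exists>U\<in>carrier T. U \<otimes>\<^bsub>T\<^esub> (\<one>\<^bsub>T\<^esub> \<oplus>\<^bsub>T\<^esub> R \<otimes>\<^bsub>T\<^esub> (a, m, b)) = \<one>\<^bsub>T\<^esub>" by blast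
      qed
    qed
  qed
qed

end

lemma zero_nil: "ring S \<Longrightarrow> \<zero>\<^bsub>S\<^esub> \<in> nilpotents S"
  unfolding nilpotents_def by (auto intro!: exI[of _ "1::nat"] simp: ring.ring_simprules)

lemma (in trictx) nil_fst: "P \<in> nilpotents T \<Longrightarrow> fst P \<in> nilpotents R1 \<and> snd (snd P) \<in> nilpotents R2"
proof -
  assume "P \<in> nilpotents T"
  then obtain n where P: "P \<in> carrier T" "P [^]\<^bsub>T\<^esub> (n::nat) = \<zero>\<^bsub>T\<^esub>" unfolding nilpotents_def by auto
  then show ?thesis using T_pow[of P n] unfolding nilpotents_def by (auto simp: T_carrier T_zero)
qed

theorem corollary2p22:
  fixes R1 :: "('a, 'c) ring_scheme" and M :: "('m, 'd) ring_scheme"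
    and R2 :: "('b, 'e) ring_scheme"
    and l :: "'a \<Rightarrow> 'm \<Rightarrow> 'm" and r :: "'m \<Rightarrow> 'b \<Rightarrow> 'm"
  assumes "ring R1" and "ring R2" and "bimodule R1 M R2 l r"
  shows "NJ_symmetric (tri_ring R1 M R2 l r) \<longleftrightarrow> NJ_symmetric R1 \<and> NJ_symmetric R2"
proof -
  interpret t: trictx R1 M R2 l r by (rule trictx.intro[OF assms(3)])
  show ?thesis
  proof
    assume N: "NJ_symmetric (tri_ring R1 M R2 l r)"
    have N': "\<And>A B C. A \<in> carrier t.T \<Longrightarrow> B \<in> carrier t.T \<Longrightarrow> C \<in> carrier t.T \<Longrightarrow>
      A \<otimes>\<^bsub>t.T\<^esub> B \<otimes>\<^bsub>t.T\<^esub> C \<in> nilpotents t.T \<Longrightarrow> B \<otimes>\<^bsub>t.T\<^esub> A \<otimes>\<^bsub>t.T\<^esub> C \<in> jacobson_radical t.T"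
      using N unfolding NJ_symmetric_def by blast
    have "NJ_symmetric R1"
      unfolding NJ_symmetric_def
    proof (intro ballI impI)
      fix a b c assume abc: "a \<in> carrier R1" "b \<in> carrier R1" "c \<in> carrier R1"
        and n: "a \<otimes>\<^bsub>R1\<^esub> b \<otimes>\<^bsub>R1\<^esub> c \<in> nilpotents R1"
      have e1: "(a, \<zero>\<^bsub>M\<^esub>, \<zero>\<^bsub>R2\<^esub>) \<otimes>\<^bsub>t.T\<^esub> (b, \<zero>\<^bsub>M\<^esub>, \<zero>\<^bsub>R2\<^esub>) \<otimes>\<^bsub>t.T\<^esub> (c, \<zero>\<^bsub>M\<^esub>, \<zero>\<^bsub>R2\<^esub>) = (a \<otimes>\<^bsub>R1\<^esub> b \<otimes>\<^bsub>R1\<^esub> c, \<zero>\<^bsub>M\<^esub>, \<zero>\<^bsub>R2\<^esub>)"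
        using abc by (simp add: t.T_mult)
      have e2: "(b, \<zero>\<^bsub>M\<^esub>, \<zero>\<^bsub>R2\<^esub>) \<otimes>\<^bsub>t.T\<^esub> (a, \<zero>\<^bsub>M\<^esub>, \<zero>\<^bsub>R2\<^esub>) \<otimes>\<^bsub>t.T\<^esub> (c, \<zero>\<^bsub>M\<^esub>, \<zero>\<^bsub>R2\<^esub>) = (b \<otimes>\<^bsub>R1\<^esub> a \<otimes>\<^bsub>R1\<^esub> c, \<zero>\<^bsub>M\<^esub>, \<zero>\<^bsub>R2\<^esub>)"
        using abc by (simp add: t.T_mult)
      have "(a \<otimes>\<^bsub>R1\<^esub> b \<otimes>\<^bsub>R1\<^esub> c, \<zero>\<^bsub>M\<^esub>, \<zero>\<^bsub>R2\<^esub>) \<in> nilpotents t.T"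
        using t.T_nil[of "(a \<otimes>\<^bsub>R1\<^esub> b \<otimes>\<^bsub>R1\<^esub> c, \<zero>\<^bsub>M\<^esub>, \<zero>\<^bsub>R2\<^esub>)"] n abc zero_nil[OF assms(2)]
        by (simp add: t.T_carrier)
      then have "(b \<otimes>\<^bsub>R1\<^esub> a \<otimes>\<^bsub>R1\<^esub> c, \<zero>\<^bsub>M\<^esub>, \<zero>\<^bsub>R2\<^esub>) \<in> jacobson_radical t.T"
        using N'[of "(a, \<zero>\<^bsub>M\<^esub>, \<zero>\<^bsub>R2\<^esub>)" "(b, \<zero>\<^bsub>M\<^esub>, \<zero>\<^bsub>R2\<^esub>)" "(c, \<zero>\<^bsub>M\<^esub>, \<zero>\<^bsub>R2\<^esub>)"] e1 e2 abc
        by (simp add: t.T_carrier)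
      then show "b \<otimes>\<^bsub>R1\<^esub> a \<otimes>\<^bsub>R1\<^esub> c \<in> jacobson_radical R1" using t.T_jac by blast
    qed
    moreover have "NJ_symmetric R2"
      unfolding NJ_symmetric_def
    proof (intro ballI impI)
      fix a b c assume abc: "a \<in> carrier R2" "b \<in> carrier R2" "c \<in> carrier R2"
        and n: "a \<otimes>\<^bsub>R2\<^esub> b \<otimes>\<^bsub>R2\<^esub> c \<in> nilpotents R2"
      have e1: "(\<zero>\<^bsub>R1\<^esub>, \<zero>\<^bsub>M\<^esub>, a) \<otimes>\<^bsub>t.T\<^esub> (\<zero>\<^bsub>R1\<^esub>, \<zero>\<^bsub>M\<^esub>, b) \<otimes>\<^bsub>t.T\<^esub> (\<zero>\<^bsub>R1\<^esub>, \<zero>\<^bsub>M\<^esub>, c) = (\<zero>\<^bsub>R1\<^esub>, \<zero>\<^bsub>M\<^esub>, a \<otimes>\<^bsub>R2\<^esub> b \<otimes>\<^bsub>R2\<^esub> c)"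
        using abc by (simp add: t.T_mult)
      have e2: "(\<zero>\<^bsub>R1\<^esub>, \<zero>\<^bsub>M\<^esub>, b) \<otimes>\<^bsub>t.T\<^esub> (\<zero>\<^bsub>R1\<^esub>, \<zero>\<^bsub>M\<^esub>, a) \<otimes>\<^bsub>t.T\<^esub> (\<zero>\<^bsub>R1\<^esub>, \<zero>\<^bsub>M\<^esub>, c) = (\<zero>\<^bsub>R1\<^esub>, \<zero>\<^bsub>M\<^esub>, b \<otimes>\<^bsub>R2\<^esub> a \<otimes>\<^bsub>R2\<^esub> c)"
        using abc by (simp add: t.T_mult)
      have "(\<zero>\<^bsub>R1\<^esub>, \<zero>\<^bsub>M\<^esub>, a \<otimes>\<^bsub>R2\<^esub> b \<otimes>\<^bsub>R2\<^esub> c) \<in> nilpotents t.T"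
        using t.T_nil[of "(\<zero>\<^bsub>R1\<^esub>, \<zero>\<^bsub>M\<^esub>, a \<otimes>\<^bsub>R2\<^esub> b \<otimes>\<^bsub>R2\<^esub> c)"] n abc zero_nil[OF assms(1)]
        by (simp add: t.T_carrier)
      then have "(\<zero>\<^bsub>R1\<^esub>, \<zero>\<^bsub>M\<^esub>, b \<otimes>\<^bsub>R2\<^esub> a \<otimes>\<^bsub>R2\<^esub> c) \<in> jacobson_radical t.T"
        using N'[of "(\<zero>\<^bsub>R1\<^esub>, \<zero>\<^bsub>M\<^esub>, a)" "(\<zero>\<^bsub>R1\<^esub>, \<zero>\<^bsub>M\<^esub>, b)" "(\<zero>\<^bsub>R1\<^esub>, \<zero>\<^bsub>M\<^esub>, c)"] e1 e2 abc
        by (simp add: t.T_carrier)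
      then show "b \<otimes>\<^bsub>R2\<^esub> a \<otimes>\<^bsub>R2\<^esub> c \<in> jacobson_radical R2" using t.T_jac by blast
    qed
    ultimately show "NJ_symmetric R1 \<and> NJ_symmetric R2" by blast
  next
    assume H: "NJ_symmetric R1 \<and> NJ_symmetric R2"
    show "NJ_symmetric (tri_ring R1 M R2 l r)"
      unfolding NJ_symmetric_def
    proof (intro ballI impI)
      fix A B C assume A: "A \<in> carrier t.T" and B: "B \<in> carrier t.T" and C: "C \<in> carrier t.T"
        and n: "A \<otimes>\<^bsub>t.T\<^esub> B \<otimes>\<^bsub>t.T\<^esub> C \<in> nilpotents t.T"
      obtain a1 m1 b1 where a: "A = (a1, m1, b1)" "a1 \<in> carrier R1" "m1 \<in> carrier M" "b1 \<in> carrier R2"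
        using A by (auto simp: t.T_carrier)
      obtain a2 m2 b2 where b: "B = (a2, m2, b2)" "a2 \<in> carrier R1" "m2 \<in> carrier M" "b2 \<in> carrier R2"
        using B by (auto simp: t.T_carrier)
      obtain a3 m3 b3 where c: "C = (a3, m3, b3)" "a3 \<in> carrier R1" "m3 \<in> carrier M" "b3 \<in> carrier R2"
        using C by (auto simp: t.T_carrier)
      have n1: "a1 \<otimes>\<^bsub>R1\<^esub> a2 \<otimes>\<^bsub>R1\<^esub> a3 \<in> nilpotents R1"
        and n2: "b1 \<otimes>\<^bsub>R2\<^esub> b2 \<otimes>\<^bsub>R2\<^esub> b3 \<in> nilpotents R2"
        using t.nil_fst[OF n] a b c by (auto simp: t.T_mult)
      have j1: "a2 \<otimes>\<^bsub>R1\<^esub> a1 \<otimes>\<^bsub>R1\<^esub> a3 \<in> jacobson_radical R1"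
        using H n1 a b c unfolding NJ_symmetric_def by blast
      have j2: "b2 \<otimes>\<^bsub>R2\<^esub> b1 \<otimes>\<^bsub>R2\<^esub> b3 \<in> jacobson_radical R2"
        using H n2 a b c unfolding NJ_symmetric_def by blast
      interpret Tr: ring t.T by (rule t.T_ring)
      have "B \<otimes>\<^bsub>t.T\<^esub> A \<otimes>\<^bsub>t.T\<^esub> C \<in> carrier t.T" using A B C by simp
      then obtain mm where "B \<otimes>\<^bsub>t.T\<^esub> A \<otimes>\<^bsub>t.T\<^esub> C = (a2 \<otimes>\<^bsub>R1\<^esub> a1 \<otimes>\<^bsub>R1\<^esub> a3, mm, b2 \<otimes>\<^bsub>R2\<^esub> b1 \<otimes>\<^bsub>R2\<^esub> b3)"
        "mm \<in> carrier M"
        using a b c by (auto simp: t.T_mult t.T_carrier)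
      then show "B \<otimes>\<^bsub>t.T\<^esub> A \<otimes>\<^bsub>t.T\<^esub> C \<in> jacobson_radical t.T"
        using j1 j2 t.T_jac by simp
    qed
  qed
qed

end
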